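(* Let $\varphi:[0,1]\to[0,1]$ be continuous and non-decreasing with $\varphi(0)=0$, $\varphi(1)=1$, and let $m\geq1$ be an integer. Call $\psi:[0,1]\to\mathbb R$ piecewise constant with $m+1$ pieces if there exist $0=t_0\leq t_1\leq\dots\leq t_m\leq t_{m+1}=1$ such that $\psi$ is constant on each $[t_{i-1},t_i)$, $i=1,\dots,m+1$. Then there exists a piecewise constant $\psi$ with $m+1$ pieces and $\psi\leq\varphi$ on $[0,1]$ that attains $$c_m=\inf\left\{\int_0^1(\varphi(t)-\psi(t))\,dt:\ \psi \text{ piecewise constant with } m+1 \text{ pieces},\ \psi\leq\varphi\right\}.$$ *)

theory Defs
  imports "HOL-Analysis.Analysis"
begin

definition piecewise_const :: "nat \<Rightarrow> (real \<Rightarrow> real) \<Rightarrow> bool" where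
  "piecewise_const m \<psi> \<longleftrightarrow>
     (\<exists>t :: nat \<Rightarrow> real. t 0 = 0 \<and> t (m + 1) = 1 \<and>
        (\<forall>i \<le> m. t i \<le> t (Suc i)) \<and>
        (\<forall>i \<in> {1..m + 1}. \<exists>c. \<forall>x \<in> {t (i - 1)..<t i}. \<psi> x = c))"

definition c_opt :: "nat \<Rightarrow> (real \<Rightarrow> real) \<Rightarrow> real" where
  "c_opt m \<phi> = Inf {integral {0..1} (\<lambda>t. \<phi> t - \<psi> t) | \<psi>.
       piecewise_const m \<psi> \<and> (\<forall>t \<in> {0..1}. \<psi> t \<le> \<phi> t)}"

end

theory Submission
  imports Defs
begin

lemma step_int:
  fixes t c :: "nat \<Rightarrow> real" and \<psi> :: "real \<Rightarrow> real"
  assumes "\<forall>i<k. t i \<le> t (Suc i)"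
    and "\<forall>i\<in>{1..k}. \<forall>x\<in>{t(i-1)..<t i}. \<psi> x = c i"
  shows "(\<psi> has_integral (\<Sum>i=1..k. c i * (t i - t(i-1)))) {t 0..t k}"
  using assms
proof (induction k)
  case 0
  then show ?case using has_integral_refl(1)[of \<psi> "t 0"] by simp
next
  case (Suc k)
  have IH: "(\<psi> has_integral (\<Sum>i=1..k. c i * (t i - t(i-1)))) {t 0..t k}"
    using Suc by auto
  have mono: "t 0 \<le> t k"
  proof -
    have "\<And>j. j \<le> k \<Longrightarrow> t 0 \<le> t j"
    proof -
      fix j assume "j \<le> k" thus "t 0 \<le> t j"
      proof (induction j)
        case (Suc j)
        have "t j \<le> t (Suc j)" using Suc.prems \<open>\<forall>i<Suc k. t i \<le> t (Suc i)\<close> by simp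
        then show ?case using Suc by simp
      qed simp
    qed
    thus ?thesis by simp
  qed
  have le: "t k \<le> t (Suc k)" using Suc.prems by auto
  have "((\<lambda>x. c (Suc k)) has_integral (c (Suc k) * (t (Suc k) - t k))) {t k..t (Suc k)}"
    using has_integral_const_real[of "c (Suc k)" "t k" "t (Suc k)"] le by (simp add: mult.commute)
  note cst = this
  have "(\<psi> has_integral (c (Suc k) * (t (Suc k) - t k))) {t k..t (Suc k)}"
  proof (rule has_integral_spike_finite[where S="{t (Suc k)}"])
    fix x assume "x \<in> {t k..t (Suc k)} - {t (Suc k)}"
    then have "x \<in> {t (Suc k - 1)..<t (Suc k)}" by auto
    then show "\<psi> x = c (Suc k)" using Suc.prems(2) by (metis atLeastAtMost_iff le_refl Suc_le_mono le0 One_nat_def)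
  qed (auto intro: cst)
  from has_integral_combine[OF mono le IH this]
  show ?case by (simp add: add.commute)
qed

lemma chain_mono:
  fixes t :: "nat \<Rightarrow> real"
  assumes "\<forall>i\<le>m. t i \<le> t (Suc i)" "i \<le> j" "j \<le> Suc m"
  shows "t i \<le> t j"
  using assms(2,3)
proof (induction j rule: dec_induct)
  case (step j)
  then have "t j \<le> t (Suc j)" using assms(1) by simp
  then show ?case using step by simp
qed simp

lemma K_compact:
  "compact {t :: nat \<Rightarrow> real. (\<forall>i. t i \<in> {0..1}) \<and> t 0 = 0 \<and> t (m+1) = 1 \<and> (\<forall>i\<le>m. t i \<le> t (Suc i))}"
proof -
  have c1: "compact (Pi UNIV (\<lambda>_::nat. {0..1::real}))"
    using compactin_PiE[of "\<lambda>_::nat. euclidean" UNIV "\<lambda>_. {0..1::real}"]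
    by (simp add: euclidean_product_topology PiE_UNIV_domain)
  have eq: "{t :: nat \<Rightarrow> real. (\<forall>i. t i \<in> {0..1}) \<and> t 0 = 0 \<and> t (m+1) = 1 \<and> (\<forall>i\<le>m. t i \<le> t (Suc i))}
    = Pi UNIV (\<lambda>_::nat. {0..1::real}) \<inter> ({t. t 0 = 0} \<inter> {t. t (m+1) = 1} \<inter> (\<Inter>i\<in>{..m}. {t. t i \<le> t (Suc i)}))"
    by auto
  have "closed ({t :: nat \<Rightarrow> real. t 0 = 0} \<inter> {t. t (m+1) = 1} \<inter> (\<Inter>i\<in>{..m}. {t. t i \<le> t (Suc i)}))"
    by (intro closed_Int closed_INT ballI closed_Collect_eq closed_Collect_le continuous_on_product_coordinates continuous_on_const)
  then show ?thesis unfolding eq by (rule compact_Int_closed[OF c1])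
qed

theorem proposition4:
  fixes \<phi> :: "real \<Rightarrow> real" and m :: nat
  assumes "continuous_on {0..1} \<phi>"
    and "mono_on {0..1} \<phi>"
    and "\<phi> ` {0..1} \<subseteq> {0..1}"
    and "\<phi> 0 = 0" and "\<phi> 1 = 1"
    and "m \<ge> 1"
  shows "\<exists>\<psi>. piecewise_const m \<psi> \<and> (\<forall>t \<in> {0..1}. \<psi> t \<le> \<phi> t) \<and>
             integral {0..1} (\<lambda>t. \<phi> t - \<psi> t) = c_opt m \<phi>"
proof -
  define K where "K = {t :: nat \<Rightarrow> real. (\<forall>i. t i \<in> {0..1}) \<and> t 0 = 0 \<and> t (m+1) = 1 \<and> (\<forall>i\<le>m. t i \<le> t (Suc i))}"
  define F where "F t = (\<Sum>i=1..m+1. \<phi> (t (i-1)) * (t i - t (i-1)))" for t :: "nat \<Rightarrow> real"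
  have Kc: "compact K" unfolding K_def by (rule K_compact)
  have Kne: "(\<lambda>i. if i \<le> m then 0 else 1) \<in> K" unfolding K_def by auto
  have phic: "\<And>i. continuous_on K (\<lambda>t. \<phi> (t i))"
    by (rule continuous_on_compose2[OF assms(1) continuous_on_subset[OF continuous_on_product_coordinates]])
       (auto simp: K_def)
  have Fc: "continuous_on K F" unfolding F_def
    by (intro continuous_intros phic continuous_on_subset[OF continuous_on_product_coordinates]) auto
  obtain s where sK: "s \<in> K" and smax: "\<And>t. t \<in> K \<Longrightarrow> F t \<le> F s"
    using continuous_attains_sup[OF Kc _ Fc] Kne by blast
  have phi_int: "(\<phi> has_integral integral {0..1} \<phi>) {0..1}"
    using assms(1) integrable_continuous_real by blast
  have lower: "integral {0..1} \<phi> - F s \<le> integral {0..1} (\<lambda>x. \<phi> x - \<psi> x)"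
    if pc: "piecewise_const m \<psi>" and le: "\<forall>x\<in>{0..1}. \<psi> x \<le> \<phi> x" for \<psi>
  proof -
    from pc obtain t where t0: "t 0 = 0" and t1: "t (m+1) = 1" and tm: "\<forall>i\<le>m. t i \<le> t (Suc i)"
      and tc: "\<forall>i\<in>{1..m+1}. \<exists>c. \<forall>x\<in>{t (i-1)..<t i}. \<psi> x = c"
      unfolding piecewise_const_def by blast
    obtain c where c: "\<forall>i\<in>{1..m+1}. \<forall>x\<in>{t (i-1)..<t i}. \<psi> x = c i"
      using tc by metis
    have hi: "(\<psi> has_integral (\<Sum>i=1..m+1. c i * (t i - t(i-1)))) {t 0..t (m+1)}"
      by (rule step_int) (use tm c in auto)
    hence hi': "(\<psi> has_integral (\<Sum>i=1..m+1. c i * (t i - t(i-1)))) {0..1}" using t0 t1 by simp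
    have trange: "\<And>i. i \<le> m+1 \<Longrightarrow> t i \<in> {0..1}"
      using chain_mono[OF tm, of 0] chain_mono[OF tm, of _ "Suc m"] t0 t1 by auto
    define t' where "t' i = t (min i (m+1))" for i
    have t'K: "t' \<in> K" unfolding K_def t'_def using trange t0 t1 tm by auto
    have Ft': "F t' = F t" unfolding F_def t'_def by (intro sum.cong) auto
    have "(\<Sum>i=1..m+1. c i * (t i - t(i-1))) \<le> F t"
      unfolding F_def
    proof (rule sum_mono)
      fix i assume i: "i \<in> {1..m+1}"
      have lei: "t (i-1) \<le> t i" using tm i by (metis Suc_diff_1 atLeastAtMost_iff diff_le_self le_trans Suc_le_mono less_one not_less Suc_eq_plus1 order.trans le_add_diff_inverse2 add_le_cancel_right)
      show "c i * (t i - t(i-1)) \<le> \<phi> (t (i-1)) * (t i - t(i-1))"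
      proof (cases "t (i-1) < t i")
        case True
        have "\<psi> (t (i-1)) = c i" using c i True by auto
        moreover have "\<psi> (t (i-1)) \<le> \<phi> (t (i-1))" using le trange i by auto
        ultimately show ?thesis using True by (intro mult_right_mono) auto
      next
        case False
        then show ?thesis using lei by simp
      qed
    qed
    also have "\<dots> \<le> F s" using smax[OF t'K] Ft' by simp
    finally have "(\<Sum>i=1..m+1. c i * (t i - t(i-1))) \<le> F s" .
    moreover have "integral {0..1} (\<lambda>x. \<phi> x - \<psi> x) = integral {0..1} \<phi> - (\<Sum>i=1..m+1. c i * (t i - t(i-1)))"
      using has_integral_diff[OF phi_int hi'] by (simp add: integral_unique)
    ultimately show ?thesis by simp
  qed
  have s0: "s 0 = 0" and s1: "s (m+1) = 1" and sm: "\<forall>i\<le>m. s i \<le> s (Suc i)" and srange: "\<And>i. s i \<in> {0..1}"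
    using sK unfolding K_def by auto
  define \<psi> where "\<psi> x = \<phi> (Max (s ` {j. j \<le> m \<and> s j \<le> x}))" for x
  have psi_piece: "\<psi> x = \<phi> (s (i-1))" if i: "i \<in> {1..m+1}" and x: "x \<in> {s (i-1)..<s i}" for i x
  proof -
    have "s ` {j. j \<le> m \<and> s j \<le> x} \<subseteq> {..s (i-1)}"
    proof
      fix y assume "y \<in> s ` {j. j \<le> m \<and> s j \<le> x}"
      then obtain j where j: "j \<le> m" "s j \<le> x" "y = s j" by auto
      have "j \<le> i - 1"
      proof (rule ccontr)
        assume "\<not> j \<le> i - 1"
        then have "i \<le> j" by simp
        then have "s i \<le> s j" using chain_mono[OF sm] j(1) by simp
        then show False using x j by simp
      qed
      moreover have "i - 1 \<le> Suc m" using i by auto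
      ultimately show "y \<in> {..s (i-1)}" using chain_mono[OF sm, of j "i-1"] j by simp
    qed
    moreover have "s (i-1) \<in> s ` {j. j \<le> m \<and> s j \<le> x}" using i x by auto
    ultimately have "Max (s ` {j. j \<le> m \<and> s j \<le> x}) = s (i-1)"
      by (intro Max_eqI) auto
    then show ?thesis unfolding \<psi>_def by simp
  qed
  have pc: "piecewise_const m \<psi>"
    unfolding piecewise_const_def using s0 s1 sm psi_piece by blast
  have psile: "\<forall>x\<in>{0..1}. \<psi> x \<le> \<phi> x"
  proof
    fix x :: real assume x: "x \<in> {0..1}"
    let ?S = "s ` {j. j \<le> m \<and> s j \<le> x}"
    have fin: "finite ?S" by simp
    have ne: "s 0 \<in> ?S" using s0 x by auto
    have "Max ?S \<in> ?S" using fin ne by (intro Max_in) auto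
    then have "Max ?S \<le> x" by auto
    moreover have "Max ?S \<in> {0..1}" using \<open>Max ?S \<in> ?S\<close> srange by auto
    ultimately show "\<psi> x \<le> \<phi> x" unfolding \<psi>_def
      using assms(2) x by (auto intro: mono_onD)
  qed
  have hs: "(\<psi> has_integral F s) {0..1}"
  proof -
    have "(\<psi> has_integral (\<Sum>i=1..m+1. \<phi> (s (i-1)) * (s i - s(i-1)))) {s 0..s (m+1)}"
      by (rule step_int) (use sm psi_piece in auto)
    then show ?thesis using s0 s1 unfolding F_def by simp
  qed
  have val: "integral {0..1} (\<lambda>x. \<phi> x - \<psi> x) = integral {0..1} \<phi> - F s"
    using has_integral_diff[OF phi_int hs] by (simp add: integral_unique)
  have "c_opt m \<phi> = integral {0..1} (\<lambda>x. \<phi> x - \<psi> x)"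
    unfolding c_opt_def
  proof (rule cInf_eq_minimum)
    show "integral {0..1} (\<lambda>x. \<phi> x - \<psi> x) \<in> {integral {0..1} (\<lambda>t. \<phi> t - \<psi> t) | \<psi>.
       piecewise_const m \<psi> \<and> (\<forall>t \<in> {0..1}. \<psi> t \<le> \<phi> t)}"
      using pc psile by blast
  next
    fix y assume "y \<in> {integral {0..1} (\<lambda>t. \<phi> t - \<psi> t) | \<psi>.
       piecewise_const m \<psi> \<and> (\<forall>t \<in> {0..1}. \<psi> t \<le> \<phi> t)}"
    then show "integral {0..1} (\<lambda>x. \<phi> x - \<psi> x) \<le> y" using lower val by auto
  qed
  then show ?thesis using pc psile by metis
qed

end
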